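(* Let $\mathcal M=(\mathbf M^{(\lambda)})_{\lambda>0}$ be a weight matrix on $\mathbb N_0^d$. (i) If (R1): for every $\lambda>0$ there exist $\kappa\ge\lambda$, $B,C,H>0$ with $\alpha^{\alpha/2}M^{(\lambda)}_\beta\le BC^{|\alpha|}H^{|\alpha+\beta|}M^{(\kappa)}_{\alpha+\beta}$ for all $\alpha,\beta\in\mathbb N_0^d$, and (R2): for every $\lambda>0$ there exist $\kappa\ge\lambda$, $A\ge1$ with $M^{(\lambda)}_{\alpha+e_j}\le A^{|\alpha|+1}M^{(\kappa)}_\alpha$ for all $\alpha$ and $1\le j\le d$, then $H_\gamma\in\mathcal S_{\{\mathcal M\}}$ for all $\gamma\in\mathbb N_0^d$. (ii) If (B1): for every $\lambda>0$ there exist $0<\kappa\le\lambda$, $H>0$ such that for every $C>0$ there is $B>0$ with $\alpha^{\alpha/2}M^{(\kappa)}_\beta\le BC^{|\alpha|}H^{|\alpha+\beta|}M^{(\lambda)}_{\alpha+\beta}$ for all $\alpha,\beta$, and (B2): for every $\lambda>0$ there exist $0<\kappa\le\lambda$, $A\ge1$ with $M^{(\kappa)}_{\alpha+e_j}\le A^{|\alpha|+1}M^{(\lambda)}_\alpha$ for all $\alpha$ and $1\le j\le d$, then $H_\gamma\in\mathcal S_{(\mathcal M)}$ for all $\gamma\in\mathbb N_0^d$.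
   Context: A weight matrix is a family $\mathcal M=(\mathbf M^{(\lambda)})_{\lambda>0}$ with $\mathbf M^{(\lambda)}=(M^{(\lambda)}_\alpha)_{\alpha\in\mathbb N_0^d}$ sequences of positive reals, $M^{(\lambda)}_0=1$, and $M^{(\lambda)}_\alpha\le M^{(\kappa)}_\alpha$ for all $\alpha$ whenever $0<\lambda\le\kappa$. Notation: $|\alpha|=\sum\alpha_j$, $e_j$ the $j$-th unit vector, $\alpha^{\alpha/2}=\prod_j\alpha_j^{\alpha_j/2}$ with $0^0=1$. $\|f\|_{\infty,\mathbf M,h}:=\sup_{\alpha,\beta}\frac{\|x^\alpha\partial^\beta f\|_\infty}{h^{|\alpha+\beta|}M_{\alpha+\beta}}$; $\mathcal S_{\{\mathcal M\}}$ ($\mathcal S_{(\mathcal M)}$) is the set of $f\in C^\infty(\mathbb R^d)$ with $\|f\|_{\infty,\mathbf M^{(\lambda)},h}<\infty$ for some (for all) $\lambda,h>0$. Hermite functions: $H_\gamma(x)=(2^{|\gamma|}\gamma!\pi^{d/2})^{-1/2}h_\gamma(x)e^{-|x|^2/2}$, $h_\gamma(x)=(-1)^{|\gamma|}e^{|x|^2}\partial^\gamma e^{-|x|^2}$. *)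

theory Defs
  imports "HOL-Analysis.Analysis"
begin

text \<open>Multi-indices on the index type 'd (so that d = CARD('d)) are functions 'd \<Rightarrow> nat.\<close>

definition mi_abs :: "('d::finite \<Rightarrow> nat) \<Rightarrow> nat" where
  "mi_abs \<alpha> = (\<Sum>j\<in>UNIV. \<alpha> j)"

definition mi_add :: "('d \<Rightarrow> nat) \<Rightarrow> ('d \<Rightarrow> nat) \<Rightarrow> ('d \<Rightarrow> nat)" where
  "mi_add \<alpha> \<beta> = (\<lambda>j. \<alpha> j + \<beta> j)"

definition mi_unit :: "'d \<Rightarrow> ('d \<Rightarrow> nat)" where
  "mi_unit j = (\<lambda>i. if i = j then 1 else 0)"

definition mi_zero :: "'d \<Rightarrow> nat" where
  "mi_zero = (\<lambda>_. 0)"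

definition mi_fact :: "('d::finite \<Rightarrow> nat) \<Rightarrow> real" where
  "mi_fact \<alpha> = (\<Prod>j\<in>UNIV. fact (\<alpha> j))"

text \<open>alpha^(alpha/2) = prod_j alpha_j^(alpha_j/2), with 0^0 = 1.\<close>
definition mi_halfpow :: "('d::finite \<Rightarrow> nat) \<Rightarrow> real" where
  "mi_halfpow \<alpha> = (\<Prod>j\<in>UNIV. sqrt (real (\<alpha> j) ^ \<alpha> j))"

definition monom_pow :: "real^'d \<Rightarrow> ('d::finite \<Rightarrow> nat) \<Rightarrow> real" where
  "monom_pow x \<alpha> = (\<Prod>j\<in>UNIV. (x $ j) ^ \<alpha> j)"

definition partial :: "'d::finite \<Rightarrow> (real^'d \<Rightarrow> real) \<Rightarrow> real^'d \<Rightarrow> real" where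
  "partial j f x = deriv (\<lambda>t. f (x + t *\<^sub>R axis j 1)) 0"

fun iter_partial :: "'d::finite list \<Rightarrow> (real^'d \<Rightarrow> real) \<Rightarrow> real^'d \<Rightarrow> real" where
  "iter_partial [] f = f"
| "iter_partial (j # js) f = partial j (iter_partial js f)"

definition smooth_fun :: "(real^'d::finite \<Rightarrow> real) \<Rightarrow> bool" where
  "smooth_fun f \<longleftrightarrow> (\<forall>js. continuous_on UNIV (iter_partial js f) \<and>
      (\<forall>j x. (\<lambda>t. iter_partial js f (x + t *\<^sub>R axis j 1)) differentiable (at 0)))"

text \<open>partial^beta f: differentiate beta_j times in direction j (order irrelevant for smooth f).\<close>
definition mi_partial :: "('d::finite \<Rightarrow> nat) \<Rightarrow> (real^'d \<Rightarrow> real) \<Rightarrow> real^'d \<Rightarrow> real" where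
  "mi_partial \<beta> f = iter_partial (SOME js. \<forall>j. count_list js j = \<beta> j) f"

definition hermite_poly :: "('d::finite \<Rightarrow> nat) \<Rightarrow> real^'d \<Rightarrow> real" where
  "hermite_poly \<gamma> x = (-1) ^ mi_abs \<gamma> * exp ((norm x)\<^sup>2) *
      mi_partial \<gamma> (\<lambda>y. exp (- (norm y)\<^sup>2)) x"

definition hermite_fun :: "('d::finite \<Rightarrow> nat) \<Rightarrow> real^'d \<Rightarrow> real" where
  "hermite_fun \<gamma> x = (2 ^ mi_abs \<gamma> * mi_fact \<gamma> * pi powr (real CARD('d) / 2)) powr (-1/2)
      * hermite_poly \<gamma> x * exp (- (norm x)\<^sup>2 / 2)"

text \<open>Weight matrix: M \<lambda> \<alpha> = M^(\<lambda>)_\<alpha>, \<lambda> > 0.\<close>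
definition weight_matrix :: "(real \<Rightarrow> ('d \<Rightarrow> nat) \<Rightarrow> real) \<Rightarrow> bool" where
  "weight_matrix M \<longleftrightarrow>
     (\<forall>lam>0. (\<forall>\<alpha>. M lam \<alpha> > 0) \<and> M lam mi_zero = 1) \<and>
     (\<forall>lam kap \<alpha>. 0 < lam \<longrightarrow> lam \<le> kap \<longrightarrow> M lam \<alpha> \<le> M kap \<alpha>)"

definition norm_finite :: "(('d::finite \<Rightarrow> nat) \<Rightarrow> real) \<Rightarrow> real \<Rightarrow> (real^'d \<Rightarrow> real) \<Rightarrow> bool" where
  "norm_finite Mseq h f \<longleftrightarrow> (\<exists>K. \<forall>\<alpha> \<beta> x.
      \<bar>monom_pow x \<alpha> * mi_partial \<beta> f x\<bar> / (h ^ mi_abs (mi_add \<alpha> \<beta>) * Mseq (mi_add \<alpha> \<beta>)) \<le> K)"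

definition S_roumieu :: "(real \<Rightarrow> ('d::finite \<Rightarrow> nat) \<Rightarrow> real) \<Rightarrow> (real^'d \<Rightarrow> real) set" where
  "S_roumieu M = {f. smooth_fun f \<and> (\<exists>lam>0. \<exists>h>0. norm_finite (M lam) h f)}"

definition S_beurling :: "(real \<Rightarrow> ('d::finite \<Rightarrow> nat) \<Rightarrow> real) \<Rightarrow> (real^'d \<Rightarrow> real) set" where
  "S_beurling M = {f. smooth_fun f \<and> (\<forall>lam>0. \<forall>h>0. norm_finite (M lam) h f)}"

end

theory Submission
  imports Defs "HOL-Computational_Algebra.Polynomial"
begin


definition G :: "real \<Rightarrow> real poly \<Rightarrow> real \<Rightarrow> real" where
  "G c p t = poly p t * exp (-(c * t\<^sup>2))"
definition Dc :: "real \<Rightarrow> real poly \<Rightarrow> real poly" where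
  "Dc c p = pderiv p - smult (2*c) (pCons 0 p)"

lemma G_has_deriv: "((G c p) has_real_derivative G c (Dc c p) t) (at t)"
proof -
  have "((\<lambda>t. poly p t * exp (-(c * t\<^sup>2))) has_real_derivative
     poly (pderiv p) t * exp (-(c * t\<^sup>2)) + poly p t * (exp (-(c * t\<^sup>2)) * (-(c * (2 * t))))) (at t)"
    by (auto intro!: derivative_eq_intros simp: power2_eq_square)
  moreover have "poly (pderiv p) t * exp (-(c * t\<^sup>2)) + poly p t * (exp (-(c * t\<^sup>2)) * (-(c * (2 * t))))
     = G c (Dc c p) t" by (simp add: G_def Dc_def algebra_simps)
  ultimately show ?thesis unfolding G_def[abs_def] by simp
qed

lemma deriv_G: "deriv (G c p) = G c (Dc c p)"
  using G_has_deriv DERIV_imp_deriv by blast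

lemma funpow_deriv_G: "(deriv ^^ n) (G c p) = G c ((Dc c ^^ n) p)"
  by (induction n) (auto simp: deriv_G)

definition smooth1 :: "(real \<Rightarrow> real) \<Rightarrow> bool" where
  "smooth1 g \<longleftrightarrow> (\<forall>n t. ((deriv ^^ n) g has_real_derivative (deriv ^^ Suc n) g t) (at t))"

lemma smooth1_G: "smooth1 (G c p)"
  unfolding smooth1_def funpow_deriv_G
  by (metis G_has_deriv funpow.simps(2) funpow_deriv_G o_apply deriv_G)

lemma smooth1_funpow: "smooth1 g \<Longrightarrow> smooth1 ((deriv ^^ k) g)"
  unfolding smooth1_def by (metis funpow_add o_apply add_Suc)



definition Fp :: "real \<Rightarrow> ('d::finite \<Rightarrow> real \<Rightarrow> real) \<Rightarrow> real^'d \<Rightarrow> real" where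
  "Fp c g x = c * (\<Prod>i\<in>UNIV. g i (x$i))"

lemma Fp_line: "Fp c g (x + t *\<^sub>R axis j 1) = (c * (\<Prod>i\<in>UNIV-{j}. g i (x$i))) * g j (x$j + t)"
proof -
  have "(\<Prod>i\<in>UNIV. g i ((x + t *\<^sub>R axis j 1)$i)) = g j (x$j + t) * (\<Prod>i\<in>UNIV-{j}. g i ((x + t *\<^sub>R axis j 1)$i))"
    by (subst prod.remove[where x=j]) (auto simp: axis_def)
  also have "(\<Prod>i\<in>UNIV-{j}. g i ((x + t *\<^sub>R axis j 1)$i)) = (\<Prod>i\<in>UNIV-{j}. g i (x$i))"
    by (rule prod.cong) (auto simp: axis_def)
  finally show ?thesis unfolding Fp_def by simp
qed

lemma Fp_line_deriv:
  assumes "(g j has_real_derivative D) (at (x$j))"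
  shows "((\<lambda>t. Fp c g (x + t *\<^sub>R axis j 1)) has_real_derivative (c * (\<Prod>i\<in>UNIV-{j}. g i (x$i))) * D) (at 0)"
proof -
  have "((\<lambda>t. g j (t + x$j)) has_real_derivative D) (at 0)"
    using assms DERIV_shift[of "g j" D 0 "x$j"] by simp
  then have "((\<lambda>t. g j (x$j + t)) has_real_derivative D) (at 0)" by (simp add: add.commute)
  then show ?thesis unfolding Fp_line by (intro DERIV_cmult)
qed

lemma partial_Fp:
  assumes "\<And>t. (g j has_real_derivative deriv (g j) t) (at t)"
  shows "partial j (Fp c g) = Fp c (g(j := deriv (g j)))"
proof
  fix x
  have "partial j (Fp c g) x = (c * (\<Prod>i\<in>UNIV-{j}. g i (x$i))) * deriv (g j) (x$j)"
    unfolding partial_def using Fp_line_deriv[where g=g and j=j and x=x and c=c, OF assms[of "x$j"]] DERIV_imp_deriv by blast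
  also have "\<dots> = Fp c (g(j := deriv (g j))) x"
  proof -
    have "(\<Prod>i\<in>UNIV. (g(j := deriv (g j))) i (x$i)) = deriv (g j) (x$j) * (\<Prod>i\<in>UNIV-{j}. (g(j := deriv (g j))) i (x$i))"
      by (subst prod.remove[where x=j]) auto
    also have "(\<Prod>i\<in>UNIV-{j}. (g(j := deriv (g j))) i (x$i)) = (\<Prod>i\<in>UNIV-{j}. g i (x$i))"
      by (rule prod.cong) auto
    finally show ?thesis unfolding Fp_def by simp
  qed
  finally show "partial j (Fp c g) x = Fp c (g(j := deriv (g j))) x" .
qed

lemma iter_partial_Fp:
  assumes "\<And>i. smooth1 (g i)"
  shows "iter_partial js (Fp c g) = Fp c (\<lambda>i. (deriv ^^ count_list js i) (g i))"
proof (induction js)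
  case Nil
  then show ?case by simp
next
  case (Cons j js)
  let ?g = "\<lambda>i. (deriv ^^ count_list js i) (g i)"
  have d: "\<And>t. (?g j has_real_derivative deriv (?g j) t) (at t)"
    using assms unfolding smooth1_def by (metis funpow.simps(2) o_apply)
  have "iter_partial (j # js) (Fp c g) = Fp c (?g(j := deriv (?g j)))"
    using Cons partial_Fp[where g="?g" and j=j and c=c, OF d] by simp
  also have "?g(j := deriv (?g j)) = (\<lambda>i. (deriv ^^ count_list (j # js) i) (g i))"
    by (rule ext) auto
  finally show ?case .
qed

lemma Fp_regular:
  fixes g :: "'d::finite \<Rightarrow> real \<Rightarrow> real"
  assumes "\<And>i. smooth1 (g i)"
  shows "continuous_on UNIV (Fp c g) \<and> (\<forall>j x. (\<lambda>t. Fp c g (x + t *\<^sub>R axis j 1)) differentiable (at 0))"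
proof
  have cont: "\<And>i. isCont (g i) t" for t
    using assms unfolding smooth1_def by (metis DERIV_isCont funpow_0)
  have "continuous_on UNIV (\<lambda>x::real^'d. g i (x$i))" for i
    by (rule continuous_on_compose2[of UNIV "g i"]) (auto intro!: continuous_at_imp_continuous_on cont continuous_intros)
  then show "continuous_on UNIV (Fp c g)" unfolding Fp_def[abs_def]
    by (intro continuous_intros) auto
  show "\<forall>j x. (\<lambda>t. Fp c g (x + t *\<^sub>R axis j 1)) differentiable (at 0)"
  proof (intro allI)
    fix j x
    have "(g j has_real_derivative deriv (g j) (x$j)) (at (x$j))"
      using assms unfolding smooth1_def by (metis funpow_0 funpow.simps(2) o_apply)
    from Fp_line_deriv[where g=g and j=j and x=x and c=c, OF this] show "(\<lambda>t. Fp c g (x + t *\<^sub>R axis j 1)) differentiable (at 0)"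
      using real_differentiable_def differentiableI has_field_derivative_imp_has_derivative by blast
  qed
qed

lemma smooth_Fp:
  assumes "\<And>i. smooth1 (g i)"
  shows "smooth_fun (Fp c g)"
  unfolding smooth_fun_def
proof
  fix js
  show "continuous_on UNIV (iter_partial js (Fp c g)) \<and>
         (\<forall>j x. (\<lambda>t. iter_partial js (Fp c g) (x + t *\<^sub>R axis j 1)) differentiable at 0)"
    unfolding iter_partial_Fp[OF assms] by (rule Fp_regular) (use assms smooth1_funpow in blast)
qed

lemma count_list_replicate': "count_list (replicate n i) j = (if i = j then n else 0)"
  by (induction n) auto

lemma exists_js: "\<exists>js. \<forall>j. count_list js (j::'d::finite) = \<beta> j"
proof -
  obtain xs :: "'d list" where xs: "set xs = UNIV" "distinct xs"
    using finite_distinct_list[of "UNIV :: 'd set"] by auto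
  have "\<And>j. count_list (concat (map (\<lambda>i. replicate (\<beta> i) i) ys)) j = (if j \<in> set ys then \<beta> j else 0)"
    if "distinct ys" for ys using that
    by (induction ys) (auto simp: count_list_append count_list_replicate')
  then have "\<forall>j. count_list (concat (map (\<lambda>i. replicate (\<beta> i) i) xs)) j = \<beta> j" using xs by auto
  then show ?thesis by blast
qed

lemma mi_partial_Fp:
  assumes "\<And>i. smooth1 (g i)"
  shows "mi_partial \<beta> (Fp c g) = Fp c (\<lambda>i. (deriv ^^ \<beta> i) (g i))"
proof -
  let ?js = "SOME js. \<forall>j. count_list js j = \<beta> j"
  have "\<forall>j. count_list ?js j = \<beta> j" using someI_ex[OF exists_js] .
  then show ?thesis unfolding mi_partial_def iter_partial_Fp[OF assms] by simp
qed



lemma coeff_bound: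
  fixes q :: "real poly"
  defines "K0 \<equiv> (\<Sum>i\<le>degree q. \<bar>coeff q i\<bar>)"
  shows "degree ((Dc (1/2) ^^ b) q) \<le> degree q + b \<and>
    (\<forall>m. \<bar>coeff ((Dc (1/2) ^^ b) q) m\<bar> \<le> K0 * 2^b * sqrt (real (degree q + b + 1)) ^ (degree q + b - m))"
proof (induction b)
  case 0
  have "\<bar>coeff q m\<bar> \<le> K0 * sqrt (real (degree q + 1)) ^ (degree q - m)" for m
  proof (cases "m \<le> degree q")
    case True
    have "\<bar>coeff q m\<bar> \<le> K0" unfolding K0_def
      using True by (intro member_le_sum) auto
    moreover have "1 \<le> sqrt (real (degree q + 1)) ^ (degree q - m)"
      by (intro one_le_power) auto
    moreover have "0 \<le> K0" unfolding K0_def by (intro sum_nonneg) auto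
    ultimately show ?thesis by (metis mult_le_cancel_left1 order_trans mult.commute mult_right_mono
        mult_cancel_left1 le_less)
  next
    case False
    then have "coeff q m = 0" by (simp add: coeff_eq_0)
    moreover have "0 \<le> K0" unfolding K0_def by (intro sum_nonneg) auto
    ultimately show ?thesis by simp
  qed
  then show ?case by simp
next
  case (Suc b)
  let ?p = "(Dc (1/2) ^^ b) q"
  let ?n = "degree q"
  let ?S = "sqrt (real (?n + b + 1))"
  let ?S' = "sqrt (real (?n + Suc b + 1))"
  have deg: "degree ?p \<le> ?n + b" and cb: "\<And>m. \<bar>coeff ?p m\<bar> \<le> K0 * 2^b * ?S ^ (?n + b - m)"
    using Suc by auto
  have K0: "0 \<le> K0" unfolding K0_def by (intro sum_nonneg) auto
  have pSuc: "(Dc (1/2) ^^ Suc b) q = pderiv ?p - pCons 0 ?p" by (simp add: Dc_def)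
  have "degree (pderiv ?p - pCons 0 ?p) \<le> ?n + Suc b"
  proof -
    have "degree (pderiv ?p) \<le> ?n + Suc b" using degree_pderiv[of ?p] deg by linarith
    moreover have "degree (pCons 0 ?p) \<le> ?n + Suc b" using deg
      by (metis add_Suc_right degree_pCons_le le_SucI not_less_eq_eq order_trans)
    ultimately show ?thesis using degree_diff_le by blast
  qed
  moreover have "\<bar>coeff (pderiv ?p - pCons 0 ?p) m\<bar> \<le> K0 * 2^Suc b * ?S' ^ (?n + Suc b - m)" for m
  proof -
    have SS: "?S \<le> ?S'" by simp
    have S1: "1 \<le> ?S" by simp
    have t1: "\<bar>real (Suc m) * coeff ?p (Suc m)\<bar> \<le> K0 * 2^b * ?S' ^ (?n + Suc b - m)"
    proof (cases "Suc m \<le> ?n + b")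
      case True
      have ex: "?n + Suc b - m = 2 + (?n + b - Suc m)" using True by arith
      have r: "real (Suc m) \<le> ?S ^ 2" using True by simp
      have "\<bar>real (Suc m) * coeff ?p (Suc m)\<bar> \<le> real (Suc m) * (K0 * 2^b * ?S ^ (?n + b - Suc m))"
        using cb[of "Suc m"] by (simp add: abs_mult mult_left_mono)
      also have "\<dots> \<le> ?S^2 * (K0 * 2^b * ?S ^ (?n + b - Suc m))"
        using K0 r by (intro mult_right_mono) auto
      also have "\<dots> = K0 * 2^b * ?S ^ (?n + Suc b - m)"
        unfolding ex power_add by (simp only: mult_ac)
      also have "\<dots> \<le> K0 * 2^b * ?S' ^ (?n + Suc b - m)"
        using K0 SS by (intro mult_left_mono power_mono) auto
      finally show ?thesis .
    next
      case False
      then have "coeff ?p (Suc m) = 0" using deg by (intro coeff_eq_0) linarith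
      then show ?thesis using K0 by simp
    qed
    have t2: "\<bar>coeff (pCons 0 ?p) m\<bar> \<le> K0 * 2^b * ?S' ^ (?n + Suc b - m)"
    proof (cases m)
      case 0
      then show ?thesis using K0 by simp
    next
      case (Suc k)
      have "\<bar>coeff (pCons 0 ?p) m\<bar> = \<bar>coeff ?p k\<bar>" using Suc by simp
      also have "\<dots> \<le> K0 * 2^b * ?S ^ (?n + b - k)" by (rule cb)
      also have "\<dots> \<le> K0 * 2^b * ?S' ^ (?n + b - k)"
        using K0 SS by (intro mult_left_mono power_mono) auto
      also have "?n + b - k = ?n + Suc b - m" using Suc by simp
      finally show ?thesis .
    qed
    have "\<bar>coeff (pderiv ?p - pCons 0 ?p) m\<bar> \<le> \<bar>real (Suc m) * coeff ?p (Suc m)\<bar> + \<bar>coeff (pCons 0 ?p) m\<bar>"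
      by (simp add: coeff_pderiv abs_triangle_ineq4 del: coeff_pCons)
    also have "\<dots> \<le> K0 * 2^Suc b * ?S' ^ (?n + Suc b - m)" using t1 t2 by simp
    finally show ?thesis .
  qed
  ultimately show ?case unfolding pSuc by blast
qed

lemma pow_gauss: "\<bar>t\<bar> ^ k * exp (-(1/2 * t\<^sup>2)) \<le> sqrt (real k) ^ k"
proof (rule power2_le_imp_le)
  show "0 \<le> sqrt (real k) ^ k" by simp
  have e: "exp (-(1/2 * t\<^sup>2)) ^ 2 = exp (-(t\<^sup>2))"
    by (simp add: exp_of_nat_mult[symmetric])
  have tt: "(\<bar>t\<bar> ^ k)\<^sup>2 = (t\<^sup>2) ^ k"
    by (metis power2_abs power_mult mult.commute)
  have "(\<bar>t\<bar> ^ k * exp (-(1/2 * t\<^sup>2)))\<^sup>2 = (\<bar>t\<bar>\<^sup>2) ^ k * exp (-(1/2 * t\<^sup>2)) ^ 2"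
    by (simp only: power_mult_distrib tt power2_abs)
  also have "\<dots> = (t\<^sup>2) ^ k * exp (-(t\<^sup>2))" by (simp only: e power2_abs)
  also have "\<dots> \<le> real k ^ k"
  proof (cases "k = 0")
    case True then show ?thesis by simp
  next
    case False
    let ?y = "t\<^sup>2 / real k"
    have "?y \<le> exp ?y" using exp_ge_add_one_self[of ?y] by linarith
    then have "?y ^ k \<le> exp ?y ^ k" by (intro power_mono) auto
    also have "exp ?y ^ k = exp (t\<^sup>2)" using False by (simp add: exp_of_nat_mult[symmetric])
    finally have "(t\<^sup>2) ^ k \<le> real k ^ k * exp (t\<^sup>2)" using False
      by (simp add: power_divide divide_le_eq mult.commute)
    then have "(t\<^sup>2) ^ k * exp (-(t\<^sup>2)) \<le> real k ^ k * exp (t\<^sup>2) * exp (-(t\<^sup>2))"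
      by (intro mult_right_mono) auto
    also have "\<dots> = real k ^ k" by (simp add: exp_minus field_simps)
    finally show ?thesis .
  qed
  also have "\<dots> = (sqrt (real k) ^ k)\<^sup>2" by (metis power_mult mult.commute real_sqrt_pow2 of_nat_0_le_iff)
  finally show "(\<bar>t\<bar> ^ k * exp (-(1/2 * t\<^sup>2)))\<^sup>2 \<le> (sqrt (real k) ^ k)\<^sup>2" .
qed



lemma growth: "\<exists>K L. K \<ge> 0 \<and> L \<ge> 1 \<and> (\<forall>s::nat. sqrt (real (s+c)) ^ (s+c+1) \<le> K * L^s * sqrt (real s) ^ s)"
proof (intro exI conjI allI)
  show "0 \<le> sqrt (exp (real c)) * 2^(c*(c+1))" by simp
  show "(1::real) \<le> 2^(c+1)" by (rule one_le_power) simp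
  fix s :: nat
  have a: "sqrt (real (s+c)) ^ s \<le> sqrt (exp (real c)) * sqrt (real s) ^ s"
  proof -
    have "real (s+c) ^ s \<le> exp (real c) * real s ^ s"
    proof (cases "s = 0")
      case True then show ?thesis by simp
    next
      case False
      let ?y = "real c / real s"
      have "1 + ?y \<le> exp ?y" by (rule exp_ge_add_one_self)
      then have "(1 + ?y) ^ s \<le> exp ?y ^ s" by (intro power_mono) auto
      also have "exp ?y ^ s = exp (real c)" using False by (simp add: exp_of_nat_mult[symmetric])
      finally have "real s ^ s * (1 + ?y) ^ s \<le> real s ^ s * exp (real c)" by (intro mult_left_mono) auto
      moreover have "real s ^ s * (1 + ?y) ^ s = real (s+c) ^ s"
        using False by (simp add: power_mult_distrib[symmetric] field_simps)
      ultimately show ?thesis by (simp add: mult.commute)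
    qed
    then have "sqrt (real (s+c) ^ s) \<le> sqrt (exp (real c) * real s ^ s)" by (rule real_sqrt_le_mono)
    then show ?thesis by (simp add: real_sqrt_mult real_sqrt_power)
  qed
  have b: "sqrt (real (s+c)) ^ (c+1) \<le> 2^(c*(c+1)) * (2^(c+1))^s"
  proof -
    have "sqrt (real (s+c)) \<le> real (s+c) + 1"
    proof -
      have "real (s+c) \<le> (real (s+c) + 1)\<^sup>2" by (simp add: power2_eq_square algebra_simps)
      then have "sqrt (real (s+c)) \<le> sqrt ((real (s+c) + 1)\<^sup>2)" by (rule real_sqrt_le_mono)
      then show ?thesis by simp
    qed
    also have "real (s+c) + 1 \<le> 2^(s+c)"
    proof -
      have "s + c < 2^(s+c)" by (rule less_exp)
      then have "real (s+c+1) \<le> real (2^(s+c))" by linarith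
      then show ?thesis by simp
    qed
    finally have "sqrt (real (s+c)) ^ (c+1) \<le> (2^(s+c)) ^ (c+1)" by (intro power_mono) auto
    also have "((2::real)^(s+c)) ^ (c+1) = 2^(c*(c+1)) * (2^(c+1))^s"
    proof -
      have e: "(s + c) * (c + 1) = c * (c + 1) + (c + 1) * (s::nat)" by (simp add: algebra_simps)
      have "((2::real)^(s+c))^(c+1) = 2^((s+c)*(c+1))" by (rule power_mult[symmetric])
      also have "\<dots> = 2 ^ (c * (c + 1) + (c + 1) * s)" by (simp only: e)
      also have "\<dots> = 2 ^ (c * (c + 1)) * 2 ^ ((c + 1) * s)" by (rule power_add)
      also have "(2::real) ^ ((c + 1) * s) = (2 ^ (c + 1)) ^ s" by (rule power_mult)
      finally show ?thesis .
    qed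
    finally show ?thesis .
  qed
  have "sqrt (real (s+c)) ^ (s+c+1) = sqrt (real (s+c)) ^ s * sqrt (real (s+c)) ^ (c+1)"
    by (simp add: power_add[symmetric])
  also have "\<dots> \<le> (sqrt (exp (real c)) * sqrt (real s) ^ s) * (2^(c*(c+1)) * (2^(c+1))^s)"
    using a b by (intro mult_mono) auto
  also have "\<dots> = sqrt (exp (real c)) * 2^(c*(c+1)) * (2^(c+1))^s * sqrt (real s) ^ s"
    by (simp only: mult_ac)
  finally show "sqrt (real (s+c)) ^ (s+c+1) \<le> sqrt (exp (real c)) * 2^(c*(c+1)) * (2^(c+1))^s * sqrt (real s) ^ s" .
qed



lemma poly_sum_N:
  fixes p :: "real poly"
  assumes "degree p \<le> N"
  shows "poly p t = (\<Sum>m\<le>N. coeff p m * t ^ m)"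
proof -
  have "poly p t = (\<Sum>m\<le>degree p. coeff p m * t ^ m)" by (simp add: poly_altdef)
  also have "\<dots> = (\<Sum>m\<le>N. coeff p m * t ^ m)"
    using assms by (intro sum.mono_neutral_left) (auto simp: coeff_eq_0)
  finally show ?thesis .
qed

lemma bound1d:
  fixes q :: "real poly"
  shows "\<exists>K L. K \<ge> 0 \<and> L \<ge> 1 \<and> (\<forall>a b t. \<bar>t ^ a * G (1/2) ((Dc (1/2) ^^ b) q) t\<bar> \<le> K * L ^ (a + b) * sqrt (real (a + b)) ^ (a + b))"
proof -
  define n where "n = degree q"
  define K0 where "K0 = (\<Sum>i\<le>degree q. \<bar>coeff q i\<bar>)"
  have K0: "K0 \<ge> 0" unfolding K0_def by (intro sum_nonneg) auto
  obtain K' L' where KL: "K' \<ge> 0" "L' \<ge> 1" and gr: "\<And>s::nat. sqrt (real (s + (n+1))) ^ (s + (n+1) + 1) \<le> K' * L'^s * sqrt (real s) ^ s"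
    using growth[of "n+1"] by blast
  show ?thesis
  proof (intro exI conjI allI)
    show "0 \<le> K0 * K'" using K0 KL by simp
    show "1 \<le> 2 * L'" using KL by simp
    fix a b :: nat and t :: real
    let ?p = "(Dc (1/2) ^^ b) q"
    let ?N = "n + b"
    let ?e = "exp (-(1/2 * t\<^sup>2))"
    let ?s = "a + b"
    let ?R = "sqrt (real (?s + (n+1)))"
    have cb: "degree ?p \<le> ?N" "\<And>m. \<bar>coeff ?p m\<bar> \<le> K0 * 2^b * sqrt (real (?N + 1)) ^ (?N - m)"
      using coeff_bound[of b q] unfolding K0_def n_def by auto
    have "t ^ a * G (1/2) ?p t = (\<Sum>m\<le>?N. coeff ?p m * (t ^ (a + m) * ?e))"
      unfolding G_def poly_sum_N[OF cb(1)]
      by (simp add: sum_distrib_left sum_distrib_right power_add mult_ac)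
    then have "\<bar>t ^ a * G (1/2) ?p t\<bar> \<le> (\<Sum>m\<le>?N. \<bar>coeff ?p m\<bar> * (\<bar>t\<bar> ^ (a + m) * ?e))"
      by (auto intro!: order_trans[OF sum_abs] sum_mono simp: abs_mult power_abs)
    also have "\<dots> \<le> (\<Sum>m\<le>?N. K0 * 2^b * ?R ^ (?s + n))"
    proof (intro sum_mono)
      fix m assume m: "m \<in> {..?N}"
      have "\<bar>coeff ?p m\<bar> * (\<bar>t\<bar> ^ (a + m) * ?e) \<le> (K0 * 2^b * sqrt (real (?N + 1)) ^ (?N - m)) * sqrt (real (a + m)) ^ (a + m)"
        using cb(2)[of m] pow_gauss[of t "a + m"] by (intro mult_mono) auto
      also have "\<dots> \<le> (K0 * 2^b * ?R ^ (?N - m)) * ?R ^ (a + m)"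
        using K0 m by (intro mult_mono mult_left_mono power_mono) auto
      also have "\<dots> = K0 * 2^b * ?R ^ (?s + n)"
      proof -
        have "?R ^ (?N - m) * ?R ^ (a + m) = ?R ^ (?s + n)"
          unfolding power_add[symmetric] by (rule arg_cong[where f="\<lambda>k. ?R ^ k"]) (use m in auto)
        then show ?thesis by (simp only: mult_ac)
      qed
      finally show "\<bar>coeff ?p m\<bar> * (\<bar>t\<bar> ^ (a + m) * ?e) \<le> K0 * 2^b * ?R ^ (?s + n)" .
    qed
    also have "\<dots> = K0 * 2^b * (real (?N + 1) * ?R ^ (?s + n))" by simp
    also have "\<dots> \<le> K0 * 2^?s * (?R ^ 2 * ?R ^ (?s + n))"
      using K0 by (intro mult_mono mult_left_mono power_increasing) auto
    also have "?R ^ 2 * ?R ^ (?s + n) = ?R ^ (?s + (n+1) + 1)"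
      by (simp add: power_add[symmetric])
    also have "K0 * 2^?s * ?R ^ (?s + (n+1) + 1) \<le> K0 * 2^?s * (K' * L'^?s * sqrt (real ?s) ^ ?s)"
      using K0 gr[of ?s] by (intro mult_left_mono) auto
    also have "\<dots> = K0 * K' * (2 * L') ^ ?s * sqrt (real ?s) ^ ?s"
      by (simp add: power_mult_distrib mult_ac)
    finally show "\<bar>t ^ a * G (1/2) ?p t\<bar> \<le> K0 * K' * (2 * L') ^ (a + b) * sqrt (real (a + b)) ^ (a + b)" .
  qed
qed



lemma norm_sq_vec: "(norm (x::real^'d::finite))\<^sup>2 = (\<Sum>i\<in>UNIV. (x$i)\<^sup>2)"
  unfolding power2_norm_eq_inner inner_vec_def by (simp add: power2_eq_square)

lemma herm_repr:
  fixes \<gamma> :: "'d::finite \<Rightarrow> nat"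
  shows "\<exists>c P. hermite_fun \<gamma> = Fp c (\<lambda>i. G (1/2) (P i))"
proof -
  define P where "P i = (Dc 1 ^^ \<gamma> i) 1" for i
  define c where "c = (2 ^ mi_abs \<gamma> * mi_fact \<gamma> * pi powr (real CARD('d) / 2)) powr (-1/2) * (-1) ^ mi_abs \<gamma>"
  have g: "(\<lambda>y::real^'d. exp (- (norm y)\<^sup>2)) = Fp 1 (\<lambda>i. G 1 1)"
  proof
    fix y :: "real^'d"
    have "exp (- (norm y)\<^sup>2) = exp (\<Sum>i\<in>UNIV. - (y$i)\<^sup>2)" by (simp add: norm_sq_vec sum_negf)
    also have "\<dots> = (\<Prod>i\<in>UNIV. exp (- (y$i)\<^sup>2))" by (simp add: exp_sum)
    finally show "exp (- (norm y)\<^sup>2) = Fp 1 (\<lambda>i. G 1 1) y" by (simp add: Fp_def G_def)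
  qed
  have mp: "mi_partial \<gamma> (\<lambda>y::real^'d. exp (- (norm y)\<^sup>2)) = Fp 1 (\<lambda>i. G 1 (P i))"
    unfolding g by (subst mi_partial_Fp) (auto simp: smooth1_G funpow_deriv_G P_def)
  have "hermite_fun \<gamma> = Fp c (\<lambda>i. G (1/2) (P i))"
  proof
    fix x :: "real^'d"
    define S where "S = (\<Sum>i\<in>UNIV. (x$i)\<^sup>2)"
    define PP where "PP = (\<Prod>i\<in>UNIV. poly (P i) (x$i))"
    have nS: "(norm x)\<^sup>2 = S" unfolding S_def by (rule norm_sq_vec)
    have e1: "(\<Prod>i\<in>UNIV. G 1 (P i) (x$i)) = PP * exp (- S)"
      unfolding G_def PP_def S_def prod.distrib by (simp add: exp_sum sum_negf[symmetric])
    have e2: "(\<Prod>i\<in>UNIV. G (1/2) (P i) (x$i)) = PP * exp (- S / 2)"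
    proof -
      have "(\<Prod>i\<in>UNIV. exp (-(1/2 * (x$i)\<^sup>2))) = exp (\<Sum>i\<in>UNIV. -(1/2 * (x$i)\<^sup>2))" by (simp add: exp_sum)
      also have "(\<Sum>i\<in>UNIV. -(1/2 * (x$i)\<^sup>2)) = - S / 2" unfolding S_def
        by (simp add: sum_negf sum_divide_distrib)
      finally show ?thesis unfolding G_def PP_def prod.distrib by simp
    qed
    have ee: "exp S * exp (- S) * exp (- S / 2) = exp (- S / 2)"
      by (simp add: exp_add[symmetric])
    show "hermite_fun \<gamma> x = Fp c (\<lambda>i. G (1/2) (P i)) x"
      unfolding hermite_fun_def hermite_poly_def mp Fp_def e1 e2 nS c_def
      using ee by (simp add: mult_ac)
  qed
  then show ?thesis by blast
qed



lemma herm_smooth: "smooth_fun (hermite_fun \<gamma>)"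
proof -
  obtain c P where "hermite_fun \<gamma> = Fp c (\<lambda>i. G (1/2) (P i))" using herm_repr by blast
  then show ?thesis by (simp add: smooth_Fp smooth1_G)
qed

lemma herm_bound:
  fixes \<gamma> :: "'d::finite \<Rightarrow> nat"
  shows "\<exists>K L. K \<ge> 0 \<and> L > 0 \<and> (\<forall>\<alpha> \<beta> x. \<bar>monom_pow x \<alpha> * mi_partial \<beta> (hermite_fun \<gamma>) x\<bar>
            \<le> K * L ^ mi_abs (mi_add \<alpha> \<beta>) * mi_halfpow (mi_add \<alpha> \<beta>))"
proof -
  obtain c P where hr: "hermite_fun \<gamma> = Fp c (\<lambda>i::'d. G (1/2) (P i))" using herm_repr by blast
  have "\<forall>i::'d. \<exists>K L. K \<ge> 0 \<and> L \<ge> 1 \<and> (\<forall>a b t. \<bar>t ^ a * G (1/2) ((Dc (1/2) ^^ b) (P i)) t\<bar> \<le> K * L ^ (a + b) * sqrt (real (a + b)) ^ (a + b))"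
    using bound1d by blast
  then obtain Kf Lf where KL: "\<And>i. Kf i \<ge> 0" "\<And>i. Lf i \<ge> 1"
    and bd: "\<And>i a b t. \<bar>t ^ a * G (1/2) ((Dc (1/2) ^^ b) (P i)) t\<bar> \<le> Kf i * Lf i ^ (a + b) * sqrt (real (a + b)) ^ (a + b)"
    by metis
  define L where "L = (\<Prod>i\<in>UNIV. Lf i)"
  have L1: "L \<ge> 1" unfolding L_def using KL(2) by (intro prod_ge_1) auto
  have LfL: "Lf i \<le> L" for i
  proof -
    have "L = Lf i * (\<Prod>j\<in>UNIV-{i}. Lf j)" unfolding L_def by (subst prod.remove[where x=i]) auto
    moreover have "1 \<le> (\<Prod>j\<in>UNIV-{i}. Lf j)" using KL(2) by (intro prod_ge_1) auto
    ultimately show ?thesis using KL(2)[of i] by (metis mult_le_cancel_left1 order.trans order_refl le_less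
          mult_left_mono mult.right_neutral zero_le_one)
  qed
  show ?thesis
  proof (intro exI conjI allI)
    show "0 \<le> \<bar>c\<bar> * (\<Prod>i\<in>UNIV. Kf i)" using KL(1) by (simp add: prod_nonneg)
    show "0 < L" using L1 by simp
    fix \<alpha> \<beta> :: "'d \<Rightarrow> nat" and x :: "real^'d"
    have mp: "mi_partial \<beta> (hermite_fun \<gamma>) x = c * (\<Prod>i\<in>UNIV. G (1/2) ((Dc (1/2) ^^ \<beta> i) (P i)) (x$i))"
      unfolding hr by (subst mi_partial_Fp) (auto simp: smooth1_G funpow_deriv_G Fp_def)
    have "\<bar>monom_pow x \<alpha> * mi_partial \<beta> (hermite_fun \<gamma>) x\<bar>
        = \<bar>c\<bar> * (\<Prod>i\<in>UNIV. \<bar>(x$i) ^ \<alpha> i * G (1/2) ((Dc (1/2) ^^ \<beta> i) (P i)) (x$i)\<bar>)"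
      unfolding mp monom_pow_def by (simp add: abs_mult prod.distrib abs_prod mult_ac)
    also have "\<dots> \<le> \<bar>c\<bar> * (\<Prod>i\<in>UNIV. Kf i * L ^ (\<alpha> i + \<beta> i) * sqrt (real (\<alpha> i + \<beta> i)) ^ (\<alpha> i + \<beta> i))"
    proof (intro mult_left_mono prod_mono conjI)
      fix i
      show "\<bar>(x$i) ^ \<alpha> i * G (1/2) ((Dc (1/2) ^^ \<beta> i) (P i)) (x$i)\<bar> \<le> Kf i * L ^ (\<alpha> i + \<beta> i) * sqrt (real (\<alpha> i + \<beta> i)) ^ (\<alpha> i + \<beta> i)"
        using bd[of "x$i" "\<alpha> i" "\<beta> i" i] KL[of i] LfL[of i]
        by (smt (verit) mult_left_mono mult_right_mono power_mono zero_le_power real_sqrt_ge_zero of_nat_0_le_iff)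
    qed auto
    also have "\<dots> = \<bar>c\<bar> * (\<Prod>i\<in>UNIV. Kf i) * L ^ mi_abs (mi_add \<alpha> \<beta>) * mi_halfpow (mi_add \<alpha> \<beta>)"
      unfolding mi_abs_def mi_add_def mi_halfpow_def power_sum real_sqrt_power prod.distrib
      by (simp add: mult_ac)
    finally show "\<bar>monom_pow x \<alpha> * mi_partial \<beta> (hermite_fun \<gamma>) x\<bar>
            \<le> \<bar>c\<bar> * (\<Prod>i\<in>UNIV. Kf i) * L ^ mi_abs (mi_add \<alpha> \<beta>) * mi_halfpow (mi_add \<alpha> \<beta>)" .
  qed
qed



lemma conclude:
  fixes K L B C H h Mv hp X :: real
  assumes "K \<ge> 0" "L > 0" "C > 0" "H > 0" "Mv > 0" "X \<le> K * L^n * hp" "hp \<le> B * C^n * H^n * Mv" "h = L * C * H"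
  shows "X / (h^n * Mv) \<le> K * B"
proof -
  have "X \<le> K * L^n * (B * C^n * H^n * Mv)"
    using assms by (meson mult_left_mono order_trans zero_le_power less_imp_le mult_nonneg_nonneg)
  also have "\<dots> = K * B * (h^n * Mv)" using assms(8) by (simp add: power_mult_distrib mult_ac)
  finally have "X \<le> K * B * (h^n * Mv)" .
  moreover have "0 < h^n * Mv" using assms by simp
  ultimately show ?thesis by (simp add: divide_le_eq)
qed

lemma mi_add_zero: "mi_add \<alpha> mi_zero = \<alpha>"
  by (simp add: mi_add_def mi_zero_def)

theorem proposition4p6:
  fixes M :: "real \<Rightarrow> ('d::finite \<Rightarrow> nat) \<Rightarrow> real"
  assumes wm: "weight_matrix M"
  shows
   "((\<forall>lam>0. \<exists>kap\<ge>lam. \<exists>B>0. \<exists>C>0. \<exists>H>0. \<forall>\<alpha> \<beta>.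
         mi_halfpow \<alpha> * M lam \<beta> \<le> B * C ^ mi_abs \<alpha> * H ^ mi_abs (mi_add \<alpha> \<beta>) * M kap (mi_add \<alpha> \<beta>)) \<and>
     (\<forall>lam>0. \<exists>kap\<ge>lam. \<exists>A\<ge>1. \<forall>\<alpha> j.
         M lam (mi_add \<alpha> (mi_unit j)) \<le> A ^ (mi_abs \<alpha> + 1) * M kap \<alpha>)
     \<longrightarrow> (\<forall>\<gamma>. hermite_fun \<gamma> \<in> S_roumieu M))
  \<and>
   ((\<forall>lam>0. \<exists>kap. 0 < kap \<and> kap \<le> lam \<and> (\<exists>H>0. \<forall>C>0. \<exists>B>0. \<forall>\<alpha> \<beta>.
         mi_halfpow \<alpha> * M kap \<beta> \<le> B * C ^ mi_abs \<alpha> * H ^ mi_abs (mi_add \<alpha> \<beta>) * M lam (mi_add \<alpha> \<beta>))) \<and>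
     (\<forall>lam>0. \<exists>kap. 0 < kap \<and> kap \<le> lam \<and> (\<exists>A\<ge>1. \<forall>\<alpha> j.
         M kap (mi_add \<alpha> (mi_unit j)) \<le> A ^ (mi_abs \<alpha> + 1) * M lam \<alpha>))
     \<longrightarrow> (\<forall>\<gamma>. hermite_fun \<gamma> \<in> S_beurling M))"
proof (intro conjI impI allI)
  have Mpos: "\<And>lam a. lam > 0 \<Longrightarrow> M lam a > 0" and M0: "\<And>lam. lam > 0 \<Longrightarrow> M lam mi_zero = 1"
    using wm unfolding weight_matrix_def by auto
  fix \<gamma> :: "'d \<Rightarrow> nat"
  obtain K L where KL: "K \<ge> 0" "L > 0" and hb: "\<And>\<alpha> \<beta> x. \<bar>monom_pow x \<alpha> * mi_partial \<beta> (hermite_fun \<gamma>) x\<bar>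
            \<le> K * L ^ mi_abs (mi_add \<alpha> \<beta>) * mi_halfpow (mi_add \<alpha> \<beta>)"
    using herm_bound[of \<gamma>] by blast
  {
    assume R: "(\<forall>lam>0. \<exists>kap\<ge>lam. \<exists>B>0. \<exists>C>0. \<exists>H>0. \<forall>\<alpha> \<beta>.
         mi_halfpow \<alpha> * M lam \<beta> \<le> B * C ^ mi_abs \<alpha> * H ^ mi_abs (mi_add \<alpha> \<beta>) * M kap (mi_add \<alpha> \<beta>)) \<and>
     (\<forall>lam>0. \<exists>kap\<ge>lam. \<exists>A\<ge>1. \<forall>\<alpha> j.
         M lam (mi_add \<alpha> (mi_unit j)) \<le> A ^ (mi_abs \<alpha> + 1) * M kap \<alpha>)"
    have R1: "\<exists>kap\<ge>1. \<exists>B>0. \<exists>C>0. \<exists>H>0. \<forall>\<alpha> \<beta>.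
         mi_halfpow \<alpha> * M 1 \<beta> \<le> B * C ^ mi_abs \<alpha> * H ^ mi_abs (mi_add \<alpha> \<beta>) * M kap (mi_add \<alpha> \<beta>)"
      using R[THEN conjunct1, rule_format, OF zero_less_one] .
    then obtain kap B C H where kap: "kap \<ge> 1" "B > 0" "C > 0" "H > 0"
      and r1: "\<And>\<alpha> \<beta>. mi_halfpow \<alpha> * M 1 \<beta> \<le> B * C ^ mi_abs \<alpha> * H ^ mi_abs (mi_add \<alpha> \<beta>) * M kap (mi_add \<alpha> \<beta>)"
      by blast
    have "norm_finite (M kap) (L * C * H) (hermite_fun \<gamma>)"
      unfolding norm_finite_def
    proof (intro exI allI)
      fix \<alpha> \<beta> :: "'d \<Rightarrow> nat" and x :: "real^'d"
      have hp: "mi_halfpow (mi_add \<alpha> \<beta>) \<le> B * C ^ mi_abs (mi_add \<alpha> \<beta>) * H ^ mi_abs (mi_add \<alpha> \<beta>) * M kap (mi_add \<alpha> \<beta>)"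
        using r1[of "mi_add \<alpha> \<beta>" mi_zero] M0[of 1] by (simp add: mi_add_zero)
      show "\<bar>monom_pow x \<alpha> * mi_partial \<beta> (hermite_fun \<gamma>) x\<bar> / ((L * C * H) ^ mi_abs (mi_add \<alpha> \<beta>) * M kap (mi_add \<alpha> \<beta>)) \<le> K * B"
        by (rule conclude[OF KL kap(3,4) Mpos hb hp]) (use kap in auto)
    qed
    moreover have "L * C * H > 0" using KL kap by simp
    moreover have "kap > 0" using kap by simp
    ultimately show "hermite_fun \<gamma> \<in> S_roumieu M"
      unfolding S_roumieu_def using herm_smooth by blast
  }
  {
    assume R: "(\<forall>lam>0. \<exists>kap. 0 < kap \<and> kap \<le> lam \<and> (\<exists>H>0. \<forall>C>0. \<exists>B>0. \<forall>\<alpha> \<beta>.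
         mi_halfpow \<alpha> * M kap \<beta> \<le> B * C ^ mi_abs \<alpha> * H ^ mi_abs (mi_add \<alpha> \<beta>) * M lam (mi_add \<alpha> \<beta>))) \<and>
     (\<forall>lam>0. \<exists>kap. 0 < kap \<and> kap \<le> lam \<and> (\<exists>A\<ge>1. \<forall>\<alpha> j.
         M kap (mi_add \<alpha> (mi_unit j)) \<le> A ^ (mi_abs \<alpha> + 1) * M lam \<alpha>))"
    have "norm_finite (M lam) h (hermite_fun \<gamma>)" if lh: "lam > 0" "h > 0" for lam h
    proof -
      obtain kap H where kap: "0 < kap" "H > 0"
        and r1: "\<And>C. C > 0 \<Longrightarrow> \<exists>B>0. \<forall>\<alpha> \<beta>. mi_halfpow \<alpha> * M kap \<beta> \<le> B * C ^ mi_abs \<alpha> * H ^ mi_abs (mi_add \<alpha> \<beta>) * M lam (mi_add \<alpha> \<beta>)"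
        using R[THEN conjunct1, rule_format, OF lh(1)] by blast
      define C where "C = h / (L * H)"
      have C: "C > 0" unfolding C_def using lh KL kap by simp
      have hC: "h = L * C * H" unfolding C_def using KL kap by simp
      obtain B where B: "B > 0" and r: "\<And>\<alpha> \<beta>. mi_halfpow \<alpha> * M kap \<beta> \<le> B * C ^ mi_abs \<alpha> * H ^ mi_abs (mi_add \<alpha> \<beta>) * M lam (mi_add \<alpha> \<beta>)"
        using r1[OF C] by blast
      show ?thesis unfolding norm_finite_def
      proof (intro exI allI)
        fix \<alpha> \<beta> :: "'d \<Rightarrow> nat" and x :: "real^'d"
        have hp: "mi_halfpow (mi_add \<alpha> \<beta>) \<le> B * C ^ mi_abs (mi_add \<alpha> \<beta>) * H ^ mi_abs (mi_add \<alpha> \<beta>) * M lam (mi_add \<alpha> \<beta>)"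
          using r[of "mi_add \<alpha> \<beta>" mi_zero] M0[OF kap(1)] by (simp add: mi_add_zero)
        show "\<bar>monom_pow x \<alpha> * mi_partial \<beta> (hermite_fun \<gamma>) x\<bar> / (h ^ mi_abs (mi_add \<alpha> \<beta>) * M lam (mi_add \<alpha> \<beta>)) \<le> K * B"
          by (rule conclude[OF KL C kap(2) Mpos[OF lh(1)] hb hp hC])
      qed
    qed
    then show "hermite_fun \<gamma> \<in> S_beurling M"
      unfolding S_beurling_def using herm_smooth by blast
  }
qed

end
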